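(* Let $G=(V,E)$ be a simple connected undirected graph with $n\ge 2$ vertices, let $S$ be the output of Algorithm Stage-One on $G$, and let $S'=S\setminus V(G(P_S))$. Then $S'$ has a system of distinct representatives in $N(S')\setminus S$; that is, there is an injective map $\varphi:S'\to N(S')\setminus S$ such that $(x,\varphi(x))\in E$ for every $x\in S'$.
   Context: For $v\in V$, $N(v)=\{u\in V:(u,v)\in E\}$; for $U\subseteq V$, $N(U)=\{v\in V\setminus U: v \text{ has a neighbor in } U\}$. Algorithm Stage-One: set $S_0=\emptyset$ and $h=0$. While $S_h$ is not a dominating set of $G$: increase $h$ by one; for each $v\in V\setminus S_{h-1}$ its active degree is $|N(v)\setminus (S_{h-1}\cup N(S_{h-1}))|$; if the maximum active degree over $V\setminus S_{h-1}$ is positive, let $v_h$ be any vertex of $V\setminus S_{h-1}$ of maximum active degree, otherwise let $v_h$ be any vertex of $V\setminus(S_{h-1}\cup N(S_{h-1}))$; set $S_h=S_{h-1}\cup\{v_h\}$. The output is $S=S_p=\{v_1,\dots,v_p\}$. For $h\in\{1,\dots,p\}$, let $S(h)=N(v_h)\setminus(S_{h-1}\cup N(S_{h-1}))$. The set of tied pairs is $P_S=\{(v_h,v): h\in\{1,\dots,p\},\ v\in S\cap S(h)\}$. $G(P_S)$ is the subgraph of $G$ whose edges are the tied pairs and whose vertices are the endpoints of tied pairs; $V(G(P_S))$ is its vertex set. *)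

theory Defs
  imports Main
begin

definition simple_graph :: "'a set \<Rightarrow> ('a \<times> 'a) set \<Rightarrow> bool" where
  "simple_graph V E \<longleftrightarrow> finite V \<and> E \<subseteq> V \<times> V \<and> sym E \<and> irrefl E"

definition connected_graph :: "'a set \<Rightarrow> ('a \<times> 'a) set \<Rightarrow> bool" where
  "connected_graph V E \<longleftrightarrow> (\<forall>u\<in>V. \<forall>v\<in>V. (u, v) \<in> E\<^sup>*)"

definition nbr :: "'a set \<Rightarrow> ('a \<times> 'a) set \<Rightarrow> 'a \<Rightarrow> 'a set" where
  "nbr V E v = {u \<in> V. (u, v) \<in> E}"

definition nbrs :: "'a set \<Rightarrow> ('a \<times> 'a) set \<Rightarrow> 'a set \<Rightarrow> 'a set" where
  "nbrs V E U = {v \<in> V - U. \<exists>u\<in>U. (u, v) \<in> E}"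

definition dominating :: "'a set \<Rightarrow> ('a \<times> 'a) set \<Rightarrow> 'a set \<Rightarrow> bool" where
  "dominating V E D \<longleftrightarrow> D \<subseteq> V \<and> (\<forall>v\<in>V. v \<in> D \<or> (\<exists>u\<in>D. (u, v) \<in> E))"

definition active_degree :: "'a set \<Rightarrow> ('a \<times> 'a) set \<Rightarrow> 'a set \<Rightarrow> 'a \<Rightarrow> nat" where
  "active_degree V E T v = card (nbr V E v - (T \<union> nbrs V E T))"

text \<open>A run of Algorithm Stage-One: the list vs = [v_1,...,v_p] of chosen vertices
(0-indexed: vs!h is v_{h+1}, and set (take h vs) is S_h).  Every legal sequence
of (nondeterministic) choices is a run.\<close>
definition stage_one_run :: "'a set \<Rightarrow> ('a \<times> 'a) set \<Rightarrow> 'a list \<Rightarrow> bool" where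
  "stage_one_run V E vs \<longleftrightarrow>
     (\<forall>h < length vs.
        let T = set (take h vs); v = vs ! h in
        \<not> dominating V E T \<and> v \<in> V - T \<and>
        (if Max (active_degree V E T ` (V - T)) > 0
         then active_degree V E T v = Max (active_degree V E T ` (V - T))
         else v \<in> V - (T \<union> nbrs V E T)))
     \<and> dominating V E (set vs)"

text \<open>S(h) for the (h+1)-th step (0-indexed h).\<close>
definition step_set :: "'a set \<Rightarrow> ('a \<times> 'a) set \<Rightarrow> 'a list \<Rightarrow> nat \<Rightarrow> 'a set" where
  "step_set V E vs h = nbr V E (vs ! h) - (set (take h vs) \<union> nbrs V E (set (take h vs)))"

definition tied_pairs :: "'a set \<Rightarrow> ('a \<times> 'a) set \<Rightarrow> 'a list \<Rightarrow> ('a \<times> 'a) set" where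
  "tied_pairs V E vs = {(vs ! h, v) | h v. h < length vs \<and> v \<in> set vs \<inter> step_set V E vs h}"

text \<open>Vertex set of G(P_S): endpoints of tied pairs.\<close>
definition tied_vertices :: "'a set \<Rightarrow> ('a \<times> 'a) set \<Rightarrow> 'a list \<Rightarrow> 'a set" where
  "tied_vertices V E vs = fst ` tied_pairs V E vs \<union> snd ` tied_pairs V E vs"

end

theory Submission
  imports Defs
begin

lemma pos_max:
  assumes "simple_graph V E" and "connected_graph V E" and "card V \<ge> 2"
    and "T \<subseteq> V" and "\<not> dominating V E T"
  shows "Max (active_degree V E T ` (V - T)) > 0"
proof -
  have fin: "finite V" "E \<subseteq> V \<times> V" "sym E" "irrefl E" using assms(1) unfolding simple_graph_def by auto
  obtain w where w: "w \<in> V" "w \<notin> T" "\<forall>u\<in>T. (u, w) \<notin> E"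
    using assms(4,5) unfolding dominating_def by auto
  have "\<exists>v\<in>V. v \<noteq> w"
  proof (rule ccontr)
    assume "\<not> ?thesis"
    then have "V \<subseteq> {w}" by auto
    then have "card V \<le> 1" using card_mono[OF finite.intros(2)[OF finite.emptyI, of w]] by simp
    with assms(3) show False by simp
  qed
  then obtain v where v: "v \<in> V" "v \<noteq> w" by auto
  have "(w, v) \<in> E\<^sup>*" using assms(2) w v unfolding connected_graph_def by auto
  then obtain u where wu: "(w, u) \<in> E" using v(2) by (cases rule: converse_rtranclE) auto
  have uw: "(u, w) \<in> E" using wu fin(3) by (meson symD)
  have uV: "u \<in> V" using wu fin(2) by auto
  have uT: "u \<notin> T" using w(3) uw by auto
  have "w \<in> nbr V E u - (T \<union> nbrs V E T)"
    using w wu unfolding nbr_def nbrs_def by auto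
  moreover have "finite (nbr V E u)" using fin(1) unfolding nbr_def by auto
  ultimately have "active_degree V E T u > 0"
    unfolding active_degree_def by (metis card_gt_0_iff empty_iff finite_Diff)
  moreover have "active_degree V E T u \<le> Max (active_degree V E T ` (V - T))"
    using uV uT fin(1) by (intro Max_ge) auto
  ultimately show ?thesis by linarith
qed

theorem claim1:
  fixes V :: "'a set" and E :: "('a \<times> 'a) set" and vs :: "'a list"
  assumes "simple_graph V E" and "connected_graph V E" and "card V \<ge> 2"
    and "stage_one_run V E vs"
  defines "S \<equiv> set vs"
  defines "S' \<equiv> set vs - tied_vertices V E vs"
  shows "\<exists>\<phi>. inj_on \<phi> S' \<and> (\<forall>x\<in>S'. \<phi> x \<in> nbrs V E S' - S \<and> (x, \<phi> x) \<in> E)"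
proof -
  have fin: "finite V" "E \<subseteq> V \<times> V" "sym E" "irrefl E" using assms(1) unfolding simple_graph_def by auto
  have run: "\<And>h. h < length vs \<Longrightarrow> \<not> dominating V E (set (take h vs)) \<and> vs ! h \<in> V - set (take h vs) \<and>
        (if Max (active_degree V E (set (take h vs)) ` (V - set (take h vs))) > 0
         then active_degree V E (set (take h vs)) (vs ! h) = Max (active_degree V E (set (take h vs)) ` (V - set (take h vs)))
         else vs ! h \<in> V - (set (take h vs) \<union> nbrs V E (set (take h vs))))"
    using assms(4) unfolding stage_one_run_def Let_def by blast
  have SV: "set vs \<subseteq> V" using assms(4) unfolding stage_one_run_def dominating_def by auto
  have key: "\<exists>h<length vs. vs ! h = x \<and> (\<exists>w. w \<in> step_set V E vs h - set vs)" if x: "x \<in> S'" for x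
  proof -
    from x obtain h where h: "h < length vs" "vs ! h = x" unfolding S'_def by (auto simp: in_set_conv_nth)
    let ?T = "set (take h vs)"
    have TV: "?T \<subseteq> V" using SV by (meson order_trans set_take_subset)
    have "Max (active_degree V E ?T ` (V - ?T)) > 0"
      using pos_max[OF assms(1-3) TV] run[OF h(1)] by blast
    then have "active_degree V E ?T (vs ! h) > 0" using run[OF h(1)] by auto
    then have "step_set V E vs h \<noteq> {}"
      unfolding active_degree_def step_set_def by (metis card.empty less_irrefl)
    then obtain w where w: "w \<in> step_set V E vs h" by auto
    have "w \<notin> set vs"
    proof
      assume "w \<in> set vs"
      then have "(vs ! h, w) \<in> tied_pairs V E vs" using h w unfolding tied_pairs_def by blast
      then have "x \<in> tied_vertices V E vs" using h unfolding tied_vertices_def by force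
      with x show False unfolding S'_def by auto
    qed
    with h w show ?thesis by blast
  qed
  define \<phi> where "\<phi> x = (SOME w. \<exists>h<length vs. vs ! h = x \<and> w \<in> step_set V E vs h - set vs)" for x
  have phi: "\<exists>h<length vs. vs ! h = x \<and> \<phi> x \<in> step_set V E vs h - set vs" if "x \<in> S'" for x
  proof -
    from key[OF that] have "\<exists>w. \<exists>h<length vs. vs ! h = x \<and> w \<in> step_set V E vs h - set vs" by blast
    then show ?thesis unfolding \<phi>_def by (rule someI_ex)
  qed
  have disj: "w \<notin> step_set V E vs k" if "h < k" "k < length vs" "w \<in> step_set V E vs h" "w \<notin> set vs" for h k w
  proof -
    have "vs ! h \<in> set (take k vs)" using that by (auto simp: in_set_conv_nth)
    moreover have "(vs ! h, w) \<in> E" using that(3) fin(3) unfolding step_set_def nbr_def by (auto dest: symD)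
    moreover have "w \<in> V" "w \<notin> set (take k vs)" using that(3,4) unfolding step_set_def nbr_def
      by (auto dest: in_set_takeD)
    ultimately have "w \<in> nbrs V E (set (take k vs))" unfolding nbrs_def by blast
    then show ?thesis unfolding step_set_def by auto
  qed
  have "inj_on \<phi> S'"
  proof (rule inj_onI)
    fix x y assume xy: "x \<in> S'" "y \<in> S'" "\<phi> x = \<phi> y"
    obtain h where h: "h < length vs" "vs ! h = x" "\<phi> x \<in> step_set V E vs h - set vs" using phi[OF xy(1)] by blast
    obtain k where k: "k < length vs" "vs ! k = y" "\<phi> y \<in> step_set V E vs k - set vs" using phi[OF xy(2)] by blast
    have "h = k"
    proof (rule ccontr)
      assume "h \<noteq> k"
      then consider "h < k" | "k < h" by linarith
      then show False
      proof cases
        case 1 then show False using disj[of h k "\<phi> x"] h k xy(3) by auto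
      next
        case 2 then show False using disj[of k h "\<phi> y"] h k xy(3) by auto
      qed
    qed
    then show "x = y" using h k by simp
  qed
  moreover have "\<forall>x\<in>S'. \<phi> x \<in> nbrs V E S' - S \<and> (x, \<phi> x) \<in> E"
  proof
    fix x assume x: "x \<in> S'"
    obtain h where h: "h < length vs" "vs ! h = x" "\<phi> x \<in> step_set V E vs h - set vs" using phi[OF x] by blast
    have e: "(x, \<phi> x) \<in> E" using h fin(3) unfolding step_set_def nbr_def by (auto dest: symD)
    have "\<phi> x \<in> V" using h unfolding step_set_def nbr_def by auto
    moreover have "\<phi> x \<notin> S'" using h unfolding S'_def by auto
    ultimately have "\<phi> x \<in> nbrs V E S'" using x e unfolding nbrs_def by blast
    then show "\<phi> x \<in> nbrs V E S' - S \<and> (x, \<phi> x) \<in> E" using h e unfolding S_def by auto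
  qed
  ultimately show ?thesis by blast
qed

end
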